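(* Let $d\ge2$ and $\overrightarrow{w}\in(0,\infty)^d$ with $w_1=\max\{w_1,\dots,w_d\}$ and $2w_1=\sum_{i=1}^dw_i$. Then for every random vector $\overrightarrow{U}=(U_1,\dots,U_d)$ with uniform$[0,1]$ marginals, $$\mathrm{Cov}\left(U_1,\sum_{i=1}^dw_iU_i\right)\ge0,$$ with equality if and only if $\overrightarrow{U}$ is $\overrightarrow{w}$-CM.
   Context: A random vector $\overrightarrow{U}=(U_1,\dots,U_d)$ with each $U_i$ uniform on $[0,1]$ is $\overrightarrow{w}$-CM if $P\left(\sum_{i=1}^d w_iU_i=\frac12\sum_{i=1}^d w_i\right)=1$. *)

theory Defs
  imports "HOL-Probability.Probability"
begin

definition covariance :: "'a measure \<Rightarrow> ('a \<Rightarrow> real) \<Rightarrow> ('a \<Rightarrow> real) \<Rightarrow> real" where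
  "covariance M X Y =
     (\<integral>x. (X x - (\<integral>z. X z \<partial>M)) * (Y x - (\<integral>z. Y z \<partial>M)) \<partial>M)"

definition uniform01 :: "'a measure \<Rightarrow> ('a \<Rightarrow> real) \<Rightarrow> bool" where
  "uniform01 M X \<longleftrightarrow>
     distributed M lborel X (\<lambda>x. indicator {0..1::real} x / measure lborel {0..1::real})"

definition w_CM :: "'a measure \<Rightarrow> nat \<Rightarrow> (nat \<Rightarrow> real) \<Rightarrow> (nat \<Rightarrow> 'a \<Rightarrow> real) \<Rightarrow> bool" where
  "w_CM M d w U \<longleftrightarrow>
     (\<forall>i\<in>{1..d}. uniform01 M (U i)) \<and>
     measure M {x \<in> space M. (\<Sum>i=1..d. w i * U i x) = (\<Sum>i=1..d. w i) / 2} = 1"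

end

theory Submission
  imports Defs
begin

lemma unif_facts:
  assumes P: "prob_space M" and U: "uniform01 M X"
  shows "X \<in> borel_measurable M" "AE x in M. 0 \<le> X x \<and> X x \<le> 1"
    "(\<integral>x. X x \<partial>M) = 1/2" "(\<integral>x. (X x - 1/2)^2 \<partial>M) = 1/12"
proof -
  interpret prob_space M by (rule P)
  have D: "distributed M lborel X (\<lambda>x. indicator {0..1::real} x / measure lborel {0..1::real})"
    using U unfolding uniform01_def .
  show m: "X \<in> borel_measurable M" using distributed_measurable[OF D] by simp
  have e: "expectation X = 1/2" using uniform_distributed_expectation[OF D] by simp
  then show "(\<integral>x. X x \<partial>M) = 1/2" by simp
  have "variance X = 1/12" using uniform_distributed_variance[OF D] by simp
  then show "(\<integral>x. (X x - 1/2)^2 \<partial>M) = 1/12" using e by simp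
  have p0: "\<P>(x in M. X x \<le> 0) = 0" using uniform_distributed_measure[OF D, of 0] by simp
  have p1: "\<P>(x in M. X x \<le> 1) = 1" using uniform_distributed_measure[OF D, of 1] by simp
  have a0: "AE x in M. 0 < X x"
    by (subst AE_iff_measurable[of "{x\<in>space M. X x \<le> 0}"])
       (use m p0 in \<open>auto simp: emeasure_eq_measure\<close>)
  have a1: "AE x in M. X x \<le> 1"
  proof -
    have "AE x in M. x \<in> {x\<in>space M. X x \<le> 1}"
      using AE_in_set_eq_1[of "{x\<in>space M. X x \<le> 1}"] m p1 by auto
    then show ?thesis by auto
  qed
  show "AE x in M. 0 \<le> X x \<and> X x \<le> 1" using a0 a1 by eventually_elim auto
qed

lemma cs_w:
  fixes w x :: "nat \<Rightarrow> real"
  assumes "\<forall>i\<in>A. w i \<ge> 0"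
  shows "(\<Sum>i\<in>A. w i * x i)^2 \<le> (\<Sum>i\<in>A. w i) * (\<Sum>i\<in>A. w i * (x i)^2)"
proof -
  have "(\<Sum>i\<in>A. sqrt (w i) * (sqrt (w i) * x i))^2 \<le> (\<Sum>i\<in>A. (sqrt (w i))^2) * (\<Sum>i\<in>A. (sqrt (w i) * x i)^2)"
    by (rule Cauchy_Schwarz_ineq_sum)
  moreover have "(\<Sum>i\<in>A. sqrt (w i) * (sqrt (w i) * x i)) = (\<Sum>i\<in>A. w i * x i)"
    using assms by (intro sum.cong) (auto simp flip: mult.assoc)
  moreover have "(\<Sum>i\<in>A. (sqrt (w i))^2) = (\<Sum>i\<in>A. w i)"
    using assms by (intro sum.cong) auto
  moreover have "(\<Sum>i\<in>A. (sqrt (w i) * x i)^2) = (\<Sum>i\<in>A. w i * (x i)^2)"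
    using assms by (intro sum.cong) (auto simp: power_mult_distrib)
  ultimately show ?thesis by simp
qed

theorem mainTheorem9:
  fixes M :: "'a measure" and d :: nat and w :: "nat \<Rightarrow> real" and U :: "nat \<Rightarrow> 'a \<Rightarrow> real"
  assumes "prob_space M"
    and "d \<ge> 2"
    and "\<forall>i\<in>{1..d}. w i > 0"
    and "w 1 = Max (w ` {1..d})"
    and "2 * w 1 = (\<Sum>i=1..d. w i)"
    and "\<forall>i\<in>{1..d}. uniform01 M (U i)"
  shows "covariance M (U 1) (\<lambda>x. \<Sum>i=1..d. w i * U i x) \<ge> 0
    \<and> (covariance M (U 1) (\<lambda>x. \<Sum>i=1..d. w i * U i x) = 0 \<longleftrightarrow> w_CM M d w U)"
proof -
  interpret prob_space M by (rule assms(1))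
  note wpos = assms(3) and U = assms(6)
  have wp: "w i > 0" if "i \<in> {1..d}" for i using wpos that by blast
  have w1: "w 1 > 0" using wpos assms(2) by auto
  have meas[measurable]: "U i \<in> borel_measurable M" if "i \<in> {1..d}" for i
    using unif_facts(1)[OF assms(1)] U that by blast
  have meas1[measurable]: "U 1 \<in> borel_measurable M" using meas assms(2) by auto
  have measS[measurable]: "(\<lambda>x. \<Sum>i=1..d. w i * U i x) \<in> borel_measurable M"
    by (intro borel_measurable_sum borel_measurable_times borel_measurable_const) (auto intro: meas)
  have measD[measurable]: "(\<lambda>x. \<Sum>i=1..d. w i * (U i x - 1/2)) \<in> borel_measurable M"
    by (intro borel_measurable_sum borel_measurable_times borel_measurable_const borel_measurable_diff) (auto intro: meas)
  have measQ[measurable]: "(\<lambda>x. \<Sum>i=2..d. w i * (U i x - 1/2)^2) \<in> borel_measurable M"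
    by (intro borel_measurable_sum borel_measurable_times borel_measurable_const borel_measurable_diff borel_measurable_power) (auto intro: meas)
  have AEb: "AE x in M. \<forall>i\<in>{1..d}. 0 \<le> U i x \<and> U i x \<le> 1"
    by (rule AE_finite_allI) (use unif_facts(2)[OF assms(1)] U in auto)
  define W where "W = (\<Sum>i=1..d. w i)"
  define D where "D = (\<lambda>x. \<Sum>i=1..d. w i * (U i x - 1/2))"
  define X where "X = (\<lambda>x. U 1 x - 1/2)"
  define R where "R = (\<lambda>x. \<Sum>i=2..d. w i * (U i x - 1/2))"
  define Q where "Q = (\<lambda>x. \<Sum>i=2..d. w i * (U i x - 1/2)^2)"
  have [measurable]: "D \<in> borel_measurable M" unfolding D_def using measD .
  have [measurable]: "X \<in> borel_measurable M" unfolding X_def using meas1 by measurable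
  have [measurable]: "Q \<in> borel_measurable M" unfolding Q_def using measQ .
  have SD: "(\<Sum>i=1..d. w i * U i x) - W/2 = D x" for x
    unfolding D_def W_def by (simp add: algebra_simps sum_subtractf sum_divide_distrib)
  have Dbound: "\<bar>D x\<bar> \<le> W" if "\<forall>i\<in>{1..d}. 0 \<le> U i x \<and> U i x \<le> 1" for x
  proof -
    have "\<bar>D x\<bar> \<le> (\<Sum>i=1..d. \<bar>w i * (U i x - 1/2)\<bar>)" unfolding D_def by (rule sum_abs)
    also have "\<dots> \<le> (\<Sum>i=1..d. w i)"
    proof (rule sum_mono)
      fix i assume i: "i \<in> {1..d}"
      have "0 \<le> U i x" "U i x \<le> 1" using that i by auto
      then have "\<bar>U i x - 1/2\<bar> \<le> 1" by auto
      moreover have "w i > 0" using wpos i by auto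
      ultimately have "w i * \<bar>U i x - 1/2\<bar> \<le> w i * 1" by (intro mult_left_mono) auto
      then show "\<bar>w i * (U i x - 1/2)\<bar> \<le> w i" using \<open>w i > 0\<close> by (simp add: abs_mult)
    qed
    finally show ?thesis unfolding W_def .
  qed
  have Xbound: "\<bar>X x\<bar> \<le> 1" if "\<forall>i\<in>{1..d}. 0 \<le> U i x \<and> U i x \<le> 1" for x
  proof -
    have "1 \<in> {1..d}" using assms(2) by auto
    then have "0 \<le> U 1 x" "U 1 x \<le> 1" using that by blast+
    then show ?thesis unfolding X_def by auto
  qed
  have W0: "W \<ge> 0" unfolding W_def by (intro sum_nonneg) (simp add: less_imp_le wp)
  have intD2: "integrable M (\<lambda>x. (D x)^2)"
  proof (rule integrable_const_bound[where B="W^2"])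
    show "AE x in M. norm ((D x)^2) \<le> W^2" using AEb
    proof eventually_elim
      case (elim x)
      have "\<bar>D x\<bar>^2 \<le> W^2" using Dbound[OF elim] by (intro power_mono) auto
      then show ?case by simp
    qed
  qed measurable
  have intXD: "integrable M (\<lambda>x. X x * D x)"
  proof (rule integrable_const_bound[where B="W"])
    show "AE x in M. norm (X x * D x) \<le> W" using AEb
    proof eventually_elim
      case (elim x)
      have "\<bar>X x\<bar> * \<bar>D x\<bar> \<le> 1 * W"
        using Dbound[OF elim] Xbound[OF elim] by (intro mult_mono) auto
      then show ?case by (simp add: abs_mult)
    qed
  qed measurable
  have intU: "integrable M (U i)" if i: "i \<in> {1..d}" for i
  proof (rule integrable_const_bound[where B=1])
    show "AE x in M. norm (U i x) \<le> 1" using AEb by eventually_elim (use i in auto)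
  qed (use meas i in auto)
  have intUsq: "integrable M (\<lambda>x. (U i x - 1/2)^2)" if i: "i \<in> {1..d}" for i
  proof (rule integrable_const_bound[where B=1])
    show "AE x in M. norm ((U i x - 1/2)^2) \<le> 1" using AEb
    proof eventually_elim
      case (elim x)
      have "0 \<le> U i x" "U i x \<le> 1" using elim i by auto
      then have "\<bar>U i x - 1/2\<bar> \<le> 1" by auto
      then have "\<bar>U i x - 1/2\<bar>^2 \<le> 1^2" by (intro power_mono) auto
      then show ?case by (simp add: power_abs[symmetric])
    qed
  qed (use meas i in auto)
  have EU1: "(\<integral>x. U 1 x \<partial>M) = 1/2" using unif_facts(3)[OF assms(1)] U assms(2) by auto
  have ES: "(\<integral>x. (\<Sum>i=1..d. w i * U i x) \<partial>M) = W/2"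
  proof -
    have "(\<integral>x. (\<Sum>i=1..d. w i * U i x) \<partial>M) = (\<Sum>i=1..d. (\<integral>x. w i * U i x \<partial>M))"
      by (rule Bochner_Integration.integral_sum[of "{1..d}" M "\<lambda>i x. w i * U i x"]) (use intU in auto)
    also have "\<dots> = (\<Sum>i=1..d. w i / 2)"
      using unif_facts(3)[OF assms(1)] U by (intro sum.cong) auto
    finally show ?thesis unfolding W_def by (simp add: sum_divide_distrib)
  qed
  have cov: "covariance M (U 1) (\<lambda>x. \<Sum>i=1..d. w i * U i x) = (\<integral>x. X x * D x \<partial>M)"
    unfolding covariance_def EU1 ES SD X_def ..
  have sumW2: "(\<Sum>i=2..d. w i) = w 1"
    using sum.atLeast_Suc_atMost[of 1 d w] assms(2,5) by (simp add: numeral_2_eq_2)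
  have DR: "D x = w 1 * X x + R x" for x
    using sum.atLeast_Suc_atMost[of 1 d "\<lambda>i. w i * (U i x - 1/2)"] assms(2)
    unfolding D_def X_def R_def by (simp add: numeral_2_eq_2)
  have RQ: "(R x)^2 \<le> w 1 * Q x" for x
  proof -
    have "\<forall>i\<in>{2..d}. 0 \<le> w i" using wp by (simp add: less_imp_le)
    from cs_w[of "{2..d}" w "\<lambda>i. U i x - 1/2", OF this] show ?thesis
      using sumW2 unfolding R_def Q_def by simp
  qed
  have pw: "X x * D x \<ge> (D x)^2 / (2 * w 1) + (w 1 * (X x)^2 - Q x) / 2" for x
  proof -
    have "X x * D x - ((D x)^2 / (2 * w 1) + (w 1 * (X x)^2 - Q x) / 2) = (w 1 * Q x - (R x)^2) / (2 * w 1)"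
      unfolding DR using w1 by (simp add: field_simps power2_eq_square)
    moreover have "(w 1 * Q x - (R x)^2) / (2 * w 1) \<ge> 0" using RQ[of x] w1 by auto
    ultimately show ?thesis by linarith
  qed
  have intQ: "integrable M Q" unfolding Q_def
    by (rule Bochner_Integration.integrable_sum) (use intUsq in auto)
  have EQ: "(\<integral>x. Q x \<partial>M) = w 1 / 12"
  proof -
    have "(\<integral>x. Q x \<partial>M) = (\<Sum>i=2..d. (\<integral>x. w i * (U i x - 1/2)^2 \<partial>M))"
      unfolding Q_def by (rule Bochner_Integration.integral_sum[of "{2..d}" M "\<lambda>i x. w i * (U i x - 1/2)^2"]) (use intUsq in auto)
    also have "\<dots> = (\<Sum>i=2..d. w i / 12)"
      using unif_facts(4)[OF assms(1)] U by (intro sum.cong) auto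
    also have "\<dots> = (\<Sum>i=2..d. w i) / 12" by (simp add: sum_divide_distrib)
    finally show ?thesis using sumW2 by simp
  qed
  have EX2: "(\<integral>x. (X x)^2 \<partial>M) = 1/12" unfolding X_def using unif_facts(4)[OF assms(1)] U assms(2) by auto
  have intX2: "integrable M (\<lambda>x. (X x)^2)" unfolding X_def using intUsq assms(2) by auto
  have main: "(\<integral>x. X x * D x \<partial>M) \<ge> (\<integral>x. (D x)^2 \<partial>M) / (2 * w 1)"
  proof -
    have "(\<integral>x. X x * D x \<partial>M) \<ge> (\<integral>x. (D x)^2 / (2 * w 1) + (w 1 * (X x)^2 - Q x) / 2 \<partial>M)"
      by (rule integral_mono) (use intXD intD2 intX2 intQ pw in auto)
    also have "(\<integral>x. (D x)^2 / (2 * w 1) + (w 1 * (X x)^2 - Q x) / 2 \<partial>M)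
        = (\<integral>x. (D x)^2 \<partial>M) / (2 * w 1) + (w 1 * (\<integral>x. (X x)^2 \<partial>M) - (\<integral>x. Q x \<partial>M)) / 2"
      using intD2 intX2 intQ by simp
    finally show ?thesis using EX2 EQ by simp
  qed
  have D2nn: "(\<integral>x. (D x)^2 \<partial>M) \<ge> 0" by simp
  have part1: "covariance M (U 1) (\<lambda>x. \<Sum>i=1..d. w i * U i x) \<ge> 0"
    using main D2nn w1 cov by (smt (verit) divide_nonneg_pos)
  define A where "A = {x \<in> space M. (\<Sum>i=1..d. w i * U i x) = (\<Sum>i=1..d. w i) / 2}"
  have Aev: "A \<in> events" unfolding A_def by measurable
  have AD: "x \<in> A \<longleftrightarrow> x \<in> space M \<and> D x = 0" for x
    using SD[of x] unfolding A_def W_def by auto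
  have "covariance M (U 1) (\<lambda>x. \<Sum>i=1..d. w i * U i x) = 0 \<longleftrightarrow> prob A = 1"
  proof
    assume c0: "covariance M (U 1) (\<lambda>x. \<Sum>i=1..d. w i * U i x) = 0"
    have "(\<integral>x. (D x)^2 \<partial>M) / (2 * w 1) \<le> 0" using main c0 cov by simp
    then have "(\<integral>x. (D x)^2 \<partial>M) = 0" using D2nn w1
      by (smt (verit) divide_pos_pos)
    then have "AE x in M. (D x)^2 = 0" using integral_nonneg_eq_0_iff_AE[OF intD2] by simp
    from this AE_space have "AE x in M. x \<in> A" by eventually_elim (use AD in auto)
    then show "prob A = 1" using AE_in_set_eq_1[OF Aev] by simp
  next
    assume "prob A = 1"
    then have "AE x in M. x \<in> A" using AE_in_set_eq_1[OF Aev] by simp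
    then have "AE x in M. X x * D x = 0" by eventually_elim (use AD in auto)
    then have "(\<integral>x. X x * D x \<partial>M) = (\<integral>x. 0 \<partial>M)" by (intro integral_cong_AE) auto
    then show "covariance M (U 1) (\<lambda>x. \<Sum>i=1..d. w i * U i x) = 0" using cov by simp
  qed
  then show ?thesis using part1 U unfolding w_CM_def A_def by auto
qed

end
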